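(* Let $a,b\in\mathbb{Q}_3$ with $\gamma(a)=2$, $\gamma(b)=0$ and $(b_0,b_1)=(1,0)$ or $(2,2)$. Then $x=\sum_{k\ge0}x_k3^k\in\mathbb{Z}_3^*$ is a solution of $x^3+ax=b$ if and only if the congruences $$x_0^3\equiv b_0\pmod3,\qquad x_0^3\equiv b_0+3b_1\pmod 9,$$ $$x_0^2x_1+x_0a_0+M_1(x_0)\equiv b_2\pmod3,$$ $$x_0^2x_2+P_3^2(x_0,x_1)+x_1a_0+x_0a_1+x_0x_1^2+M_2(x_0,x_1)\equiv b_3\pmod3,$$ $$x_0^2x_{k-1}+P_k^{k-1}(x_0,\dots,x_{k-2})+2x_0x_1x_{k-2}+x_{k-2}a_0+x_{k-3}a_1+\dots+x_0a_{k-2}+M_{k-1}(x_0,\dots,x_{k-2})\equiv b_k\pmod3,\quad k\ge4,$$ are fulfilled, where the integers $M_k(x_0,\dots,x_{k-1})$ are defined by $$x_0^3=b_0+3b_1+9M_1(x_0),$$ $$x_0^2x_1+x_0a_0=b_2-M_1(x_0)+3M_2(x_0,x_1),$$ $$x_0^2x_2+P_3^2(x_0,x_1)+x_1a_0+x_0a_1+x_0x_1^2=b_3-M_2(x_0,x_1)+3M_3(x_0,x_1,x_2),$$ $$x_0^2x_{k-1}+P_k^{k-1}(x_0,\dots,x_{k-2})+2x_0x_1x_{k-2}+x_{k-2}a_0+\dots+x_0a_{k-2}=b_k-M_{k-1}(x_0,\dots,x_{k-2})+3M_k(x_0,\dots,x_{k-1}),\quad k\ge4.$$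
   Context: Write $a=3^{\gamma(a)}(a_0+a_13+a_23^2+\dots)$, $b=3^{\gamma(b)}(b_0+b_13+b_23^2+\dots)$ in canonical form, with digits $a_j,b_j\in\{0,1,2\}$, $a_0,b_0\ne0$, $\gamma(a),\gamma(b)\in\mathbb{Z}$. $\mathbb{Z}_3^*$ is the set of $3$-adic units; $x\in\mathbb{Z}_3^*$ is written $x=x_0+x_13+x_23^2+\dots$ with $x_j\in\{0,1,2\}$, $x_0\ne0$. For $j\le k$, $$P_k^j(x_0,\dots,x_{j-1})=\sum\frac{6}{m_0!m_1!\cdots m_{j-1}!}x_0^{m_0}x_1^{m_1}\cdots x_{j-1}^{m_{j-1}},$$ the sum over nonnegative integers $m_0,\dots,m_{j-1}$ with $\sum_{i=0}^{j-1}m_i=3$ and $\sum_{i=1}^{j-1}im_i=k$. *)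

theory Defs
  imports "HOL-Number_Theory.Cong"
begin

text \<open>Elements of \<open>Z_3\<close> are represented by their canonical digit sequences
  \<open>d :: nat \<Rightarrow> int\<close> with digits in {0,1,2}; the element is \<open>\<Sum>j. d j * 3^j\<close>.\<close>

definition dig3 :: "(nat \<Rightarrow> int) \<Rightarrow> bool" where
  "dig3 d \<longleftrightarrow> (\<forall>j. d j \<in> {0, 1, 2})"

definition trunc3 :: "(nat \<Rightarrow> int) \<Rightarrow> nat \<Rightarrow> int" where
  "trunc3 d n = (\<Sum>j<n. d j * 3 ^ j)"

text \<open>With \<open>a = 3^2 (a_0 + a_1 3 + ...)\<close>, \<open>b = b_0 + b_1 3 + ...\<close>, \<open>x = x_0 + x_1 3 + ...\<close>,
  the 3-adic equation \<open>x^3 + a x = b\<close> holds iff it holds modulo every \<open>3^n\<close>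
  (\<open>Z_3 = lim Z/3^n Z\<close>); modulo \<open>3^n\<close> each element agrees with its truncation.\<close>
definition cubic_sol3 :: "(nat \<Rightarrow> int) \<Rightarrow> (nat \<Rightarrow> int) \<Rightarrow> (nat \<Rightarrow> int) \<Rightarrow> bool" where
  "cubic_sol3 a b x \<longleftrightarrow>
     (\<forall>n. [(trunc3 x n) ^ 3 + 9 * trunc3 a n * trunc3 x n = trunc3 b n] (mod 3 ^ n))"

text \<open>\<open>P_k^j(x_0,...,x_{j-1}) = \<Sum> 6/(m_0!...m_{j-1}!) x_0^{m_0}...x_{j-1}^{m_{j-1}}\<close>,
  over \<open>m_0+...+m_{j-1} = 3\<close>, \<open>\<Sum> i m_i = k\<close> (the quotient is an integer).\<close>
definition P3 :: "nat \<Rightarrow> nat \<Rightarrow> (nat \<Rightarrow> int) \<Rightarrow> int" where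
  "P3 k j x = (\<Sum>m \<in> {m :: nat \<Rightarrow> nat. (\<forall>i. j \<le> i \<longrightarrow> m i = 0) \<and>
                          (\<Sum>i<j. m i) = 3 \<and> (\<Sum>i = 1..<j. i * m i) = k}.
       ((6::int) div (\<Prod>i<j. fact (m i))) * (\<Prod>i<j. x i ^ m i))"

definition Lterm :: "(nat \<Rightarrow> int) \<Rightarrow> (nat \<Rightarrow> int) \<Rightarrow> nat \<Rightarrow> int" where
  "Lterm a x k =
    (if k = 2 then x 0 ^ 2 * x 1 + x 0 * a 0
     else if k = 3 then x 0 ^ 2 * x 2 + P3 3 2 x + x 1 * a 0 + x 0 * a 1 + x 0 * x 1 ^ 2
     else x 0 ^ 2 * x (k - 1) + P3 k (k - 1) x + 2 * x 0 * x 1 * x (k - 2)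
          + (\<Sum>i\<le>k - 2. x i * a (k - 2 - i)))"

text \<open>They are integers exactly when the preceding
  congruences hold; otherwise floor division is used (irrelevant for the statement).\<close>
fun Mseq :: "(nat \<Rightarrow> int) \<Rightarrow> (nat \<Rightarrow> int) \<Rightarrow> (nat \<Rightarrow> int) \<Rightarrow> nat \<Rightarrow> int" where
  "Mseq a b x 0 = 0"
| "Mseq a b x (Suc 0) = (x 0 ^ 3 - b 0 - 3 * b 1) div 9"
| "Mseq a b x (Suc (Suc k)) =
     (Lterm a x (Suc (Suc k)) + Mseq a b x (Suc k) - b (Suc (Suc k))) div 3"

end

theory Submission
  imports Defs "HOL-Computational_Algebra.Polynomial" "HOL-Combinatorics.Multiset_Permutations"
begin

lemma power_sum_lists:
  fixes f :: "'a \<Rightarrow> 'b::comm_semiring_1"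
  assumes "finite A"
  shows "(\<Sum>i\<in>A. f i) ^ n = (\<Sum>xs \<in> {xs. set xs \<subseteq> A \<and> length xs = n}. prod_list (map f xs))"
proof (induction n)
  case 0
  have "{xs. set xs \<subseteq> A \<and> length xs = 0} = {[]}" by auto
  then show ?case by simp
next
  case (Suc n)
  let ?S = "\<lambda>n. {xs. set xs \<subseteq> A \<and> length xs = n}"
  have im: "?S (Suc n) = (\<lambda>(a,xs). a#xs) ` (A \<times> ?S n)"
  proof
    show "?S (Suc n) \<subseteq> (\<lambda>(a,xs). a#xs) ` (A \<times> ?S n)"
    proof
      fix ys assume "ys \<in> ?S (Suc n)"
      then obtain a xs where "ys = a#xs" "a \<in> A" "xs \<in> ?S n" by (cases ys) auto
      then show "ys \<in> (\<lambda>(a,xs). a#xs) ` (A \<times> ?S n)" by force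
    qed
  qed auto
  have inj: "inj_on (\<lambda>(a,xs). a#xs) (A \<times> ?S n)" by (auto simp: inj_on_def)
  have "(\<Sum>xs \<in> ?S (Suc n). prod_list (map f xs)) = (\<Sum>(a,xs) \<in> A \<times> ?S n. f a * prod_list (map f xs))"
    unfolding im by (subst sum.reindex[OF inj]) (simp add: case_prod_unfold)
  also have "\<dots> = (\<Sum>a\<in>A. \<Sum>xs\<in>?S n. f a * prod_list (map f xs))"
    by (rule sum.cartesian_product[symmetric])
  also have "\<dots> = (\<Sum>i\<in>A. f i) * (\<Sum>xs\<in>?S n. prod_list (map f xs))"
    by (simp add: sum_product)
  finally show ?case using Suc by simp
qed

lemma prod_list_monom: "prod_list (map (\<lambda>i. monom (x i) i) xs) = monom (prod_list (map x xs)) (sum_list xs)"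
  by (induction xs) (auto simp: mult_monom monom_0 one_pCons)

definition pp :: "(nat \<Rightarrow> int) \<Rightarrow> nat \<Rightarrow> int poly" where
  "pp x j = (\<Sum>i<j. monom (x i) i)"

lemma coeff_pp_cube_lists:
  "coeff (pp x j ^ 3) k = (\<Sum>xs \<in> {xs. set xs \<subseteq> {..<j} \<and> length xs = 3 \<and> sum_list xs = k}. prod_list (map x xs))"
proof -
  have fin: "finite {xs. set xs \<subseteq> {..<j} \<and> length xs = 3}"
    by (rule finite_lists_length_eq) simp
  have "coeff (pp x j ^ 3) k = (\<Sum>xs \<in> {xs. set xs \<subseteq> {..<j} \<and> length xs = 3}.
           (if sum_list xs = k then prod_list (map x xs) else 0))"
    unfolding pp_def by (simp add: power_sum_lists coeff_sum prod_list_monom coeff_monom eq_commute)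
  also have "\<dots> = (\<Sum>xs \<in> {xs \<in> {xs. set xs \<subseteq> {..<j} \<and> length xs = 3}. sum_list xs = k}. prod_list (map x xs))"
    by (rule sum.inter_filter[symmetric, OF fin])
  also have "{xs \<in> {xs. set xs \<subseteq> {..<j} \<and> length xs = 3}. sum_list xs = k} = {xs. set xs \<subseteq> {..<j} \<and> length xs = 3 \<and> sum_list xs = k}" by auto
  finally show ?thesis .
qed

lemma sum_count_mset:
  fixes f :: "'a \<Rightarrow> 'b::comm_semiring_1"
  assumes "finite A" "set_mset M \<subseteq> A"
  shows "(\<Sum>i\<in>A. f i * of_nat (count M i)) = sum_mset (image_mset f M)"
  using assms(2)
proof (induction M)
  case empty then show ?case by simp
next
  case (add x M)
  have "(\<Sum>i\<in>A. f i * of_nat (count (add_mset x M) i)) = (\<Sum>i\<in>A. f i * of_nat (count M i) + (if i = x then f i else 0))"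
    by (rule sum.cong) (auto simp: algebra_simps)
  also have "\<dots> = (\<Sum>i\<in>A. f i * of_nat (count M i)) + f x"
    using add.prems assms(1) by (simp add: sum.distrib)
  finally show ?case using add by (simp add: add.commute)
qed

lemma prod_count_mset:
  fixes f :: "'a \<Rightarrow> 'b::comm_monoid_mult"
  assumes "finite A" "set_mset M \<subseteq> A"
  shows "(\<Prod>i\<in>A. f i ^ count M i) = prod_mset (image_mset f M)"
  using assms(2)
proof (induction M)
  case empty then show ?case by simp
next
  case (add x M)
  have "(\<Prod>i\<in>A. f i ^ count (add_mset x M) i) = (\<Prod>i\<in>A. f i ^ count M i * (if i = x then f i else 1))"
    by (rule prod.cong) (auto simp: algebra_simps)
  also have "\<dots> = (\<Prod>i\<in>A. f i ^ count M i) * f x"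
    using add.prems assms(1) by (simp add: prod.distrib)
  finally show ?case using add by (simp add: mult.commute)
qed

lemma P3_coeff: "P3 k j x = coeff (pp x j ^ 3) k"
proof -
  define Ms where "Ms = {m :: nat \<Rightarrow> nat. (\<forall>i. j \<le> i \<longrightarrow> m i = 0) \<and>
                          (\<Sum>i<j. m i) = 3 \<and> (\<Sum>i = 1..<j. i * m i) = k}"
  define Ls where "Ls = {xs. set xs \<subseteq> {..<j} \<and> length xs = 3 \<and> sum_list xs = k}"
  define g where "g = (\<lambda>xs::nat list. count (mset xs))"
  have finL: "finite Ls" unfolding Ls_def
    by (rule finite_subset[OF _ finite_lists_length_eq[of "{..<j}" 3]]) auto
  have s1: "(\<Sum>i<j. i * m i) = (\<Sum>i = 1..<j. i * m i)" for m :: "nat \<Rightarrow> nat"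
  proof (cases j)
    case (Suc j') then show ?thesis
      by (simp add: atLeast0LessThan[symmetric] sum.atLeast_Suc_lessThan)
  qed simp
  have gL: "g xs \<in> Ms" if "xs \<in> Ls" for xs
  proof -
    have sub: "set_mset (mset xs) \<subseteq> {..<j}" using that by (auto simp: Ls_def)
    have a: "\<forall>i. j \<le> i \<longrightarrow> g xs i = 0" using sub by (auto simp: g_def count_eq_zero_iff)
    have b: "(\<Sum>i<j. g xs i) = 3"
      using sum_count_mset[of "{..<j}" "mset xs" "\<lambda>_. 1::nat"] sub that
      by (simp add: g_def Ls_def size_eq_sum_mset[symmetric])
    have c: "(\<Sum>i<j. i * g xs i) = k"
      using sum_count_mset[of "{..<j}" "mset xs" "\<lambda>i. i::nat"] sub that
      by (simp add: g_def Ls_def sum_mset_sum_list)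
    show ?thesis using a b c s1 by (simp add: Ms_def)
  qed
  have fib: "{xs \<in> Ls. g xs = m} = permutations_of_multiset (Abs_multiset m)"
    and cnt: "count (Abs_multiset m) = m"
    if m: "m \<in> Ms" for m
  proof -
    have fin: "finite {i. 0 < m i}"
      by (rule finite_subset[of _ "{..<j}"]) (use m in \<open>auto simp: Ms_def not_less[symmetric]\<close>)
    show cm: "count (Abs_multiset m) = m" by (rule count_Abs_multiset[OF fin])
    have sub: "set_mset (Abs_multiset m) \<subseteq> {..<j}"
      using m by (auto simp: Ms_def cm set_mset_def not_less[symmetric])
    have sz: "size (Abs_multiset m) = 3"
      using sum_count_mset[OF _ sub, of "\<lambda>_. 1::nat"] m
      by (simp add: Ms_def cm size_eq_sum_mset[symmetric])
    have sm: "sum_mset (Abs_multiset m) = k"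
      using sum_count_mset[OF _ sub, of "\<lambda>i. i::nat"] m s1[of m]
      by (simp add: Ms_def cm)
    show "{xs \<in> Ls. g xs = m} = permutations_of_multiset (Abs_multiset m)"
    proof
      show "{xs \<in> Ls. g xs = m} \<subseteq> permutations_of_multiset (Abs_multiset m)"
        by (auto simp: permutations_of_multiset_def g_def multiset_eq_iff cm)
      show "permutations_of_multiset (Abs_multiset m) \<subseteq> {xs \<in> Ls. g xs = m}"
      proof
        fix xs assume "xs \<in> permutations_of_multiset (Abs_multiset m)"
        then have e: "mset xs = Abs_multiset m" by (simp add: permutations_of_multiset_def)
        have "set xs \<subseteq> {..<j}" using sub e by (metis set_mset_mset)
        moreover have "length xs = 3" using sz e by (metis size_mset)
        moreover have "sum_list xs = k" using sm e by (metis sum_mset_sum_list)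
        ultimately show "xs \<in> {xs \<in> Ls. g xs = m}" using e cm by (simp add: Ls_def g_def)
      qed
    qed
  qed
  have MsL: "Ms \<subseteq> g ` Ls"
  proof
    fix m assume m: "m \<in> Ms"
    obtain xs where "mset xs = Abs_multiset m" using ex_mset by blast
    then have "xs \<in> {xs \<in> Ls. g xs = m}" using fib[OF m] by (simp add: permutations_of_multiset_def)
    then show "m \<in> g ` Ls" by force
  qed
  have finM: "finite Ms" using finite_subset[OF MsL] finL by blast
  have "coeff (pp x j ^ 3) k = (\<Sum>xs\<in>Ls. prod_list (map x xs))"
    by (simp add: coeff_pp_cube_lists Ls_def)
  also have "\<dots> = (\<Sum>m\<in>Ms. \<Sum>xs\<in>{xs \<in> Ls. g xs = m}. prod_list (map x xs))"
    by (rule sum.group[symmetric, OF finL finM]) (use gL in auto)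
  also have "\<dots> = (\<Sum>m\<in>Ms. ((6::int) div (\<Prod>i<j. fact (m i))) * (\<Prod>i<j. x i ^ m i))"
  proof (rule sum.cong[OF refl])
    fix m assume m: "m \<in> Ms"
    have sub: "set_mset (Abs_multiset m) \<subseteq> {..<j}"
      using m by (auto simp: Ms_def cnt[OF m] set_mset_def not_less[symmetric])
    have pr: "prod_list (map x xs) = (\<Prod>i<j. x i ^ m i)" if "xs \<in> {xs \<in> Ls. g xs = m}" for xs
    proof -
      have "mset xs = Abs_multiset m" using that fib[OF m] by (simp add: permutations_of_multiset_def)
      then show ?thesis using prod_count_mset[OF _ sub, of x] cnt[OF m]
        by (metis finite_lessThan prod_mset_prod_list mset_map)
    qed
    have sz: "size (Abs_multiset m) = 3"
      using sum_count_mset[OF _ sub, of "\<lambda>_. 1::nat"] m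
      by (simp add: Ms_def cnt[OF m] size_eq_sum_mset[symmetric])
    have pf: "(\<Prod>x\<in>set_mset (Abs_multiset m). fact (count (Abs_multiset m) x)) = (\<Prod>i<j. fact (m i) :: nat)"
      unfolding cnt[OF m]
      by (rule prod.mono_neutral_left) (use sub cnt[OF m] in \<open>auto simp: set_mset_def\<close>)
    have cd: "card {xs \<in> Ls. g xs = m} = 6 div (\<Prod>i<j. fact (m i) :: nat)"
      using card_permutations_of_multiset(1)[of "Abs_multiset m"] fib[OF m] sz pf
      by (simp add: fact_numeral)
    have "(\<Sum>xs\<in>{xs \<in> Ls. g xs = m}. prod_list (map x xs)) = (\<Sum>xs\<in>{xs \<in> Ls. g xs = m}. (\<Prod>i<j. x i ^ m i))"
      using pr by (rule sum.cong[OF refl])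
    also have "\<dots> = of_nat (card {xs \<in> Ls. g xs = m}) * (\<Prod>i<j. x i ^ m i)" by simp
    also have "of_nat (card {xs \<in> Ls. g xs = m}) = ((6::int) div (\<Prod>i<j. fact (m i)))"
      unfolding cd by (simp add: zdiv_int of_nat_prod)
    finally show "(\<Sum>xs\<in>{xs \<in> Ls. g xs = m}. prod_list (map x xs)) = ((6::int) div (\<Prod>i<j. fact (m i))) * (\<Prod>i<j. x i ^ m i)" .
  qed
  also have "\<dots> = P3 k j x" by (simp add: P3_def Ms_def)
  finally show ?thesis by simp
qed


definition lowz :: "nat \<Rightarrow> int poly \<Rightarrow> bool" where
  "lowz N r \<longleftrightarrow> (\<forall>i<N. coeff r i = 0)"

lemma lowz_mult: "lowz N r \<Longrightarrow> lowz M s \<Longrightarrow> lowz (N+M) (r*s)"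
  unfolding lowz_def coeff_mult
proof (intro allI impI)
  fix i assume r: "\<forall>i<N. coeff r i = 0" and s: "\<forall>i<M. coeff s i = 0" and i: "i < N + M"
  show "(\<Sum>l\<le>i. coeff r l * coeff s (i - l)) = 0"
  proof (rule sum.neutral, intro ballI)
    fix l assume "l \<in> {..i}"
    then show "coeff r l * coeff s (i - l) = 0" using r s i
      by (cases "l < N") auto
  qed
qed

lemma lowz_mult1: "lowz N r \<Longrightarrow> lowz N (r*s)"
  using lowz_mult[of N r 0 s] by (simp add: lowz_def)

lemma cube_low: "lowz N d \<Longrightarrow> k < N \<Longrightarrow> coeff ((p+d)^3) k = coeff (p^3) k"
proof -
  assume d: "lowz N d" and k: "k < N"
  have "(p+d)^3 = p^3 + d * (3*p^2 + 3*p*d + d^2)"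
    by (simp add: power3_eq_cube power2_eq_square algebra_simps)
  moreover have "coeff (d * (3*p^2 + 3*p*d + d^2)) k = 0"
    using lowz_mult1[OF d] k unfolding lowz_def by blast
  ultimately show ?thesis by simp
qed

lemma coeff_pp: "coeff (pp x j) i = (if i < j then x i else 0)"
  unfolding pp_def coeff_sum by (simp add: coeff_monom)

lemma poly_pp: "poly (pp x n) 3 = trunc3 x n"
  unfolding pp_def trunc3_def poly_sum by (simp add: poly_monom)

lemma pp_split: "m \<le> n \<Longrightarrow> pp x n = pp x m + (\<Sum>i\<in>{m..<n}. monom (x i) i)"
  unfolding pp_def by (metis atLeast0LessThan sum.atLeastLessThan_concat zero_le)

lemma pp_split_low: "lowz m (\<Sum>i\<in>{m..<n}. monom (x i) i)"
  unfolding lowz_def coeff_sum by (auto simp: coeff_monom intro!: sum.neutral)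

lemma coeff_pp_cube_trunc: "k < n \<Longrightarrow> coeff (pp x n ^ 3) k = coeff (pp x (Suc k) ^ 3) k"
  using pp_split[of "Suc k" n x] cube_low[OF pp_split_low[where m="Suc k" and n=n and x=x], where k=k and p="pp x (Suc k)"]
  by simp

lemma C_big:
  assumes "3 \<le> k"
  shows "coeff (pp x (Suc k) ^ 3) k = P3 k (k-1) x + 3 * x 0 ^ 2 * x k + 6 * x 0 * x 1 * x (k-1)"
proof -
  define p where "p = pp x (k-1)"
  define u where "u = monom (x (k-1)) (k-1) + monom (x k) k"
  obtain j where kj: "k = Suc j" using assms by (cases k) auto
  have e: "pp x (Suc k) = p + u"
    by (simp add: p_def u_def pp_def kj add.assoc)
  have lu: "lowz (k-1) u" unfolding lowz_def u_def by (auto simp: coeff_monom)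
  have "lowz ((k-1)+(k-1)) (u*u)" by (rule lowz_mult[OF lu lu])
  then have l2: "lowz ((k-1)+(k-1)) ((u * u) * (3*p + u))" by (rule lowz_mult1)
  have kk: "k < (k-1)+(k-1)" using assms by arith
  have "(p+u)^3 = p^3 + smult 3 (p^2 * u) + (u * u) * (smult 3 p + u)"
  proof -
    have "(p+u)^3 = p^3 + 3 * (p^2 * u) + (u * u) * (3 * p + u)"
      by (simp add: power3_eq_cube power2_eq_square algebra_simps)
    then show ?thesis by (simp add: numeral_poly[where n="num.Bit1 num.One"])
  qed
  then have c3: "coeff ((p+u)^3) k = coeff (p^3) k + 3 * coeff (p^2 * u) k + coeff ((u * u) * (smult 3 p + u)) k"
    by (simp only: coeff_add coeff_smult)
  have "lowz ((k-1)+(k-1)) ((u * u) * (smult 3 p + u))" using \<open>lowz ((k-1)+(k-1)) (u*u)\<close> by (rule lowz_mult1)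
  then have "coeff ((u * u) * (smult 3 p + u)) k = 0" using kk unfolding lowz_def by blast
  moreover have "coeff (p^2 * u) k = coeff (p^2) 1 * x (k-1) + coeff (p^2) 0 * x k"
  proof -
    have "coeff (p^2 * u) k = coeff (monom (x (k-1)) (k-1) * p^2) k + coeff (monom (x k) k * p^2) k"
      by (simp add: u_def algebra_simps)
    also have "\<dots> = x (k-1) * coeff (p^2) 1 + x k * coeff (p^2) 0"
      using assms by (simp add: coeff_monom_mult)
    finally show ?thesis by simp
  qed
  moreover have "coeff (p^2) 0 = x 0 ^ 2" using assms by (simp add: coeff_0_power p_def coeff_pp)
  moreover have "coeff (p^2) 1 = 2 * x 0 * x 1"
    using assms by (simp add: power2_eq_square coeff_mult p_def coeff_pp atMost_Suc)
  moreover have "coeff (p^3) k = P3 k (k-1) x" by (simp add: p_def P3_coeff)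
  ultimately show ?thesis using e c3 by (simp add: algebra_simps power2_eq_square)
qed

lemma pp1: "pp x 1 = [:x 0:]" by (simp add: pp_def monom_0)
lemma pp2: "pp x 2 = [:x 0, x 1:]"
  by (simp add: pp_def numeral_2_eq_2 monom_0 monom_Suc)
lemma pp3: "pp x 3 = [:x 0, x 1, x 2:]"
  by (simp add: pp_def numeral_3_eq_3 numeral_2_eq_2 monom_0 monom_Suc)

lemma C0: "coeff (pp x 1 ^ 3) 0 = x 0 ^ 3" by (simp add: coeff_0_power coeff_pp)
lemma C1: "coeff (pp x 2 ^ 3) 1 = 3 * x 0 ^ 2 * x 1"
  by (simp add: coeff_pp power3_eq_cube coeff_mult atMost_Suc numeral_3_eq_3 algebra_simps power2_eq_square)
lemma C2: "coeff (pp x 3 ^ 3) 2 = 3 * x 0 ^ 2 * x 2 + 3 * x 0 * x 1 ^ 2"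
  by (simp add: coeff_pp power3_eq_cube coeff_mult atMost_Suc numeral_3_eq_3 numeral_2_eq_2 algebra_simps power2_eq_square)
lemma P332: "P3 3 2 x = x 1 ^ 3"
  by (simp add: P3_coeff coeff_pp power3_eq_cube coeff_mult atMost_Suc numeral_3_eq_3 numeral_2_eq_2 algebra_simps)


definition Cfull :: "(nat \<Rightarrow> int) \<Rightarrow> (nat \<Rightarrow> int) \<Rightarrow> nat \<Rightarrow> int" where
  "Cfull a x k = coeff (pp x (Suc k) ^ 3) k + (if 2 \<le> k then (\<Sum>i\<le>k-2. x i * a (k-2-i)) else 0)"

lemma LHS_mod:
  "[trunc3 x n ^ 3 + 9 * trunc3 a n * trunc3 x n = (\<Sum>k<n. 3^k * Cfull a x k)] (mod 3^n)"
proof -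
  define F where "F = pp x n ^ 3 + monom 1 2 * (pp x n * pp a n)"
  have pF: "poly F 3 = trunc3 x n ^ 3 + 9 * trunc3 a n * trunc3 x n"
    by (simp add: F_def poly_pp poly_monom)
  define N where "N = max (degree F) n"
  have "poly F 3 = (\<Sum>i\<le>degree F. coeff F i * 3 ^ i)" by (rule poly_altdef)
  also have "\<dots> = (\<Sum>i\<le>N. coeff F i * 3 ^ i)"
    by (rule sum.mono_neutral_left) (auto simp: N_def coeff_eq_0)
  also have "{..N} = {..<n} \<union> {n..N}" by (auto simp: N_def)
  also have "(\<Sum>i\<in>{..<n} \<union> {n..N}. coeff F i * 3 ^ i) = (\<Sum>i<n. coeff F i * 3 ^ i) + (\<Sum>i\<in>{n..N}. coeff F i * 3 ^ i)"
    by (rule sum.union_disjoint) auto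
  finally have e1: "poly F 3 = (\<Sum>i<n. coeff F i * 3 ^ i) + (\<Sum>i\<in>{n..N}. coeff F i * 3 ^ i)" .
  have d: "(3::int)^n dvd (\<Sum>i\<in>{n..N}. coeff F i * 3 ^ i)"
    by (rule dvd_sum) (auto intro!: dvd_mult le_imp_power_dvd)
  have cf: "coeff F i = Cfull a x i" if i: "i < n" for i
  proof -
    have "coeff (monom 1 2 * (pp x n * pp a n)) i = (if 2 \<le> i then (\<Sum>l\<le>i-2. x l * a (i-2-l)) else 0)"
    proof (cases "2 \<le> i")
      case True
      have "coeff (monom 1 2 * (pp x n * pp a n)) i = coeff (pp x n * pp a n) (i-2)"
        using True by (simp add: coeff_monom_mult)
      also have "\<dots> = (\<Sum>l\<le>i-2. x l * a (i-2-l))"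
        unfolding coeff_mult by (rule sum.cong) (use i in \<open>auto simp: coeff_pp\<close>)
      finally show ?thesis using True by simp
    qed (simp add: coeff_monom_mult)
    then show ?thesis using coeff_pp_cube_trunc[OF i, of x] by (simp add: F_def Cfull_def)
  qed
  have "(\<Sum>i<n. coeff F i * 3 ^ i) = (\<Sum>k<n. 3^k * Cfull a x k)"
    by (rule sum.cong) (auto simp: cf mult.commute)
  then show ?thesis using e1 d pF by (simp add: cong_iff_dvd_diff)
qed

definition Ef :: "(nat \<Rightarrow> int) \<Rightarrow> nat \<Rightarrow> int" where
  "Ef x k = (if k = 0 then 0 else if k = 1 then x 0 ^ 2 * x 1 else if k = 2 then x 0 ^ 2 * x 2 + x 0 * x 1 ^ 2
             else x 0 ^ 2 * x k + 2 * x 0 * x 1 * x (k - 1))"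

lemma Cfull_split:
  "Cfull a x k = (if k = 0 then x 0 ^ 3 else if k = 1 then 0 else Lterm a x k - Ef x (k-1)) + 3 * Ef x k"
proof -
  consider "k = 0" | "k = 1" | "k = 2" | "k = 3" | "4 \<le> k" by linarith
  then show ?thesis
  proof cases
    case 1 then show ?thesis using C0[of x] by (simp add: Cfull_def Ef_def)
  next
    case 2 then show ?thesis using C1[of x] by (simp add: Cfull_def Ef_def numeral_2_eq_2)
  next
    case 3 then show ?thesis using C2[of x] by (simp add: Cfull_def Ef_def Lterm_def numeral_3_eq_3 algebra_simps)
  next
    case 4 then show ?thesis using C_big[of 3 x]
      by (simp add: Cfull_def Ef_def Lterm_def atMost_Suc algebra_simps)
  next
    case 5
    then have "k - 1 \<noteq> 2" "k - 1 \<noteq> 1" "k - 1 \<noteq> 0" "k \<noteq> 2" "k \<noteq> 3" "k - 1 - 1 = k - 2" by auto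
    then show ?thesis using C_big[of k x] 5
      by (simp add: Cfull_def Ef_def Lterm_def algebra_simps)
  qed
qed

definition Wf :: "(nat \<Rightarrow> int) \<Rightarrow> (nat \<Rightarrow> int) \<Rightarrow> nat \<Rightarrow> int" where
  "Wf a x n = x 0 ^ 3 + (\<Sum>k\<in>{2..<n}. 3^k * Lterm a x k)"

lemma tele: "(\<Sum>k<Suc n. 3^k * Cfull a x k) = Wf a x (Suc n) + 3 ^ Suc n * Ef x n"
proof (induction n)
  case 0 then show ?case by (simp add: Cfull_split Wf_def Ef_def)
next
  case (Suc n)
  show ?case
  proof (cases "n = 0")
    case True then show ?thesis using Suc by (simp add: Cfull_split Wf_def Ef_def)
  next
    case False
    have "Wf a x (Suc (Suc n)) = Wf a x (Suc n) + 3 ^ Suc n * Lterm a x (Suc n)"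
      using False by (simp add: Wf_def)
    then show ?thesis using Suc False by (simp add: Cfull_split algebra_simps)
  qed
qed

lemma sol_iff: "cubic_sol3 a b x \<longleftrightarrow> (\<forall>n\<ge>1. [Wf a x n = trunc3 b n] (mod 3^n))"
proof -
  have key: "[trunc3 x n ^ 3 + 9 * trunc3 a n * trunc3 x n = Wf a x n] (mod 3^n)" if n1: "n \<ge> 1" for n
  proof -
    obtain m where n: "n = Suc m" using n1 by (cases n) auto
    have "[Wf a x n + 3^n * Ef x m = Wf a x n] (mod 3^n)" by (simp add: cong_iff_dvd_diff)
    then show ?thesis using LHS_mod[where x=x and n=n and a=a] tele[where n=m and a=a and x=x] n by (metis cong_trans)
  qed
  show ?thesis
  proof
    assume "cubic_sol3 a b x"
    then show "\<forall>n\<ge>1. [Wf a x n = trunc3 b n] (mod 3^n)"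
      unfolding cubic_sol3_def using key by (meson cong_sym cong_trans)
  next
    assume h: "\<forall>n\<ge>1. [Wf a x n = trunc3 b n] (mod 3^n)"
    show "cubic_sol3 a b x" unfolding cubic_sol3_def
    proof
      fix n show "[trunc3 x n ^ 3 + 9 * trunc3 a n * trunc3 x n = trunc3 b n] (mod 3 ^ n)"
      proof (cases "n = 0")
        case True then show ?thesis by simp
      next
        case False then show ?thesis using key h by (meson cong_trans less_one not_le)
      qed
    qed
  qed
qed


lemma trunc3_Suc: "trunc3 b (Suc n) = trunc3 b n + b n * 3 ^ n"
  by (simp add: trunc3_def)

lemma Wf_Suc: "2 \<le> n \<Longrightarrow> Wf a x (Suc n) = Wf a x n + 3 ^ n * Lterm a x n"
  by (simp add: Wf_def)

lemma Wf2: "Wf a x 2 = x 0 ^ 3" by (simp add: Wf_def)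
lemma Wf1: "Wf a x 1 = x 0 ^ 3" by (simp add: Wf_def)
lemma tr2: "trunc3 b 2 = b 0 + 3 * b 1" by (simp add: trunc3_def numeral_2_eq_2)
lemma tr1: "trunc3 b 1 = b 0" by (simp add: trunc3_def)

lemma Dlemma:
  assumes h9: "[x 0 ^ 3 = b 0 + 3 * b 1] (mod 9)"
    and hk: "\<forall>k. 2 \<le> k \<longrightarrow> k < n \<longrightarrow> [Lterm a x k + Mseq a b x (k - 1) = b k] (mod 3)"
    and n: "2 \<le> n"
  shows "Wf a x n - trunc3 b n = 3 ^ n * Mseq a b x (n - 1)"
  using n hk
proof (induction n rule: nat_induct_at_least)
  case base
  have "9 dvd (x 0 ^ 3 - b 0 - 3 * b 1)" using h9 by (simp add: cong_iff_dvd_diff algebra_simps)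
  then show ?case by (simp add: Wf2 tr2 numeral_2_eq_2[symmetric])
next
  case (Suc n)
  obtain j where nj: "n = Suc (Suc j)" using Suc.hyps by (metis add_2_eq_Suc le_iff_add add.commute)
  have ih: "Wf a x n - trunc3 b n = 3 ^ n * Mseq a b x (n - 1)" using Suc by auto
  have c: "[Lterm a x n + Mseq a b x (n - 1) = b n] (mod 3)" using Suc.prems Suc.hyps by auto
  then have "3 dvd (Lterm a x n + Mseq a b x (n - 1) - b n)" by (simp add: cong_iff_dvd_diff)
  then have m: "3 * Mseq a b x n = Lterm a x n + Mseq a b x (n - 1) - b n" by (simp add: nj)
  have "Wf a x (Suc n) - trunc3 b (Suc n) = 3 ^ n * (Lterm a x n + Mseq a b x (n - 1) - b n)"
    using ih Suc.hyps by (simp add: Wf_Suc trunc3_Suc algebra_simps)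
  also have "\<dots> = 3 ^ Suc n * Mseq a b x (Suc n - 1)" using m by simp
  finally show ?case .
qed

theorem theorem3p4:
  fixes a b x :: "nat \<Rightarrow> int"
  assumes "dig3 a" and "a 0 \<noteq> 0"
    and "dig3 b" and "b 0 \<noteq> 0"
    and "(b 0, b 1) = (1, 0) \<or> (b 0, b 1) = (2, 2)"
    and "dig3 x" and "x 0 \<noteq> 0"
  shows "cubic_sol3 a b x \<longleftrightarrow>
    ([x 0 ^ 3 = b 0] (mod 3) \<and>
     [x 0 ^ 3 = b 0 + 3 * b 1] (mod 9) \<and>
     (\<forall>k\<ge>2. [Lterm a x k + Mseq a b x (k - 1) = b k] (mod 3)))"
proof (unfold sol_iff, intro iffI)
  assume S: "\<forall>n\<ge>1. [Wf a x n = trunc3 b n] (mod 3 ^ n)"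
  have "[Wf a x 1 = trunc3 b 1] (mod 3 ^ 1)" using S by blast
  then have c1: "[x 0 ^ 3 = b 0] (mod 3)" by (simp only: Wf1 tr1 power_one_right)
  have c2: "[x 0 ^ 3 = b 0 + 3 * b 1] (mod 9)" using S[rule_format, of 2] by (simp add: Wf2 tr2)
  have "\<forall>k. 2 \<le> k \<longrightarrow> k < n \<longrightarrow> [Lterm a x k + Mseq a b x (k - 1) = b k] (mod 3)" for n
  proof (induction n)
    case 0 then show ?case by simp
  next
    case (Suc n)
    show ?case
    proof (intro allI impI)
      fix k assume k2: "2 \<le> k" and kn: "k < Suc n"
      show "[Lterm a x k + Mseq a b x (k - 1) = b k] (mod 3)"
      proof (cases "k < n")
        case True then show ?thesis using Suc.IH k2 by blast
      next
        case False
        then have kn': "k = n" using kn by simp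
        have D: "Wf a x n - trunc3 b n = 3 ^ n * Mseq a b x (n - 1)"
          by (rule Dlemma[OF c2 Suc.IH]) (use k2 kn' in simp)
        have "(3::int) ^ Suc n dvd Wf a x (Suc n) - trunc3 b (Suc n)"
          using S[rule_format, of "Suc n"] by (simp add: cong_iff_dvd_diff)
        also have "Wf a x (Suc n) - trunc3 b (Suc n) = 3 ^ n * (Lterm a x n + Mseq a b x (n - 1) - b n)"
          using D k2 kn' by (simp add: Wf_Suc trunc3_Suc algebra_simps)
        finally have "3 ^ n * 3 dvd (3::int) ^ n * (Lterm a x n + Mseq a b x (n - 1) - b n)"
          by (simp add: mult.commute)
        then have "3 dvd (Lterm a x n + Mseq a b x (n - 1) - b n)"
          by (subst (asm) dvd_mult_cancel_left) simp
        then show ?thesis using kn' by (simp add: cong_iff_dvd_diff)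
      qed
    qed
  qed
  then have "\<forall>k\<ge>2. [Lterm a x k + Mseq a b x (k - 1) = b k] (mod 3)" by blast
  then show "[x 0 ^ 3 = b 0] (mod 3) \<and> [x 0 ^ 3 = b 0 + 3 * b 1] (mod 9) \<and>
     (\<forall>k\<ge>2. [Lterm a x k + Mseq a b x (k - 1) = b k] (mod 3))" using c1 c2 by blast
next
  assume H: "[x 0 ^ 3 = b 0] (mod 3) \<and> [x 0 ^ 3 = b 0 + 3 * b 1] (mod 9) \<and>
     (\<forall>k\<ge>2. [Lterm a x k + Mseq a b x (k - 1) = b k] (mod 3))"
  show "\<forall>n\<ge>1. [Wf a x n = trunc3 b n] (mod 3 ^ n)"
  proof (intro allI impI)
    fix n :: nat assume n1: "1 \<le> n"
    show "[Wf a x n = trunc3 b n] (mod 3 ^ n)"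
    proof (cases "n = 1")
      case True
      have "[Wf a x 1 = trunc3 b 1] (mod 3 ^ 1)" using H by (simp only: Wf1 tr1 power_one_right)
      then show ?thesis using True by simp
    next
      case False
      then have "2 \<le> n" using n1 by simp
      then have "Wf a x n - trunc3 b n = 3 ^ n * Mseq a b x (n - 1)"
        using Dlemma H by blast
      then show ?thesis by (simp add: cong_iff_dvd_diff)
    qed
  qed
qed

end
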